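(* Let $\alpha:\{0,1,2,\dots\}\times[0,\infty)\to[0,\infty)$ be nondecreasing (and locally Lipschitz-continuous) in its second argument. Let $(\beta_n)_{n\ge0}$ and $(g_n)_{n\ge0}$ be nonnegative sequences of real numbers, and let $(h_n)_{n\ge0}$, $(\gamma_n)_{n\ge0}$ be real sequences with $h_n>0$ and $0<h_n\gamma_n<1$, such that $$\frac{g_{n+1}-g_n}{h_n}\le -\gamma_n g_n+\alpha(n,g_n)+\beta_n,\qquad n\ge 0,$$ or, equivalently, $g_{n+1}\le g_n(1-h_n\gamma_n)+h_n\alpha(n,g_n)+h_n\beta_n$. If there is a sequence of positive numbers $(\mu_n)_{n\ge 0}$ such that $$\alpha\Big(n,\frac{1}{\mu_n}\Big)+\beta_n\le \frac{1}{\mu_n}\Big(\gamma_n-\frac{\mu_{n+1}-\mu_n}{\mu_n h_n}\Big)\quad\forall n\ge0,\qquad g_0\le \frac{1}{\mu_0},$$ then $$0\le g_n\le \frac{1}{\mu_n},\qquad \forall n\ge 0.$$ Therefore, if $\lim_{n\to\infty}\mu_n=\infty$, then $\lim_{n\to\infty}g_n=0$. *)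

theory Defs
  imports "HOL-Analysis.Analysis"
begin

end

theory Submission
  imports Defs
begin

theorem theorem3:
  fixes \<alpha> :: "nat \<Rightarrow> real \<Rightarrow> real"
    and \<beta> g h \<gamma> \<mu> :: "nat \<Rightarrow> real"
  assumes alpha_nonneg: "\<And>n x. x \<ge> 0 \<Longrightarrow> \<alpha> n x \<ge> 0"
    and alpha_mono: "\<And>n x y. 0 \<le> x \<Longrightarrow> x \<le> y \<Longrightarrow> \<alpha> n x \<le> \<alpha> n y"
    and alpha_loclip: "\<And>n x. x \<ge> 0 \<Longrightarrow>
          \<exists>u>0. \<exists>L. L-lipschitz_on (cball x u \<inter> {0..}) (\<alpha> n)"
    and beta_nonneg: "\<And>n. \<beta> n \<ge> 0"
    and g_nonneg: "\<And>n. g n \<ge> 0"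
    and h_pos: "\<And>n. h n > 0"
    and hgamma: "\<And>n. 0 < h n * \<gamma> n \<and> h n * \<gamma> n < 1"
    and rec: "\<And>n. (g (Suc n) - g n) / h n \<le> - \<gamma> n * g n + \<alpha> n (g n) + \<beta> n"
    and mu_pos: "\<And>n. \<mu> n > 0"
    and mu_cond: "\<And>n. \<alpha> n (1 / \<mu> n) + \<beta> n
          \<le> (1 / \<mu> n) * (\<gamma> n - (\<mu> (Suc n) - \<mu> n) / (\<mu> n * h n))"
    and g0: "g 0 \<le> 1 / \<mu> 0"
  shows "(\<forall>n. 0 \<le> g n \<and> g n \<le> 1 / \<mu> n) \<and>
         (filterlim \<mu> at_top sequentially \<longrightarrow> g \<longlonglongrightarrow> 0)"
proof -
  have step: "g (Suc n) \<le> 1 / \<mu> (Suc n)" if ih: "g n \<le> 1 / \<mu> n" for n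
  proof -
    define a where "a = \<mu> n"
    define b where "b = \<mu> (Suc n)"
    define H where "H = h n"
    define x where "x = 1 / a"
    have a0: "a > 0" "b > 0" "H > 0" using mu_pos h_pos by (auto simp: a_def b_def H_def)
    have hg: "0 < H * \<gamma> n" "H * \<gamma> n < 1" using hgamma by (auto simp: H_def)
    have r: "g (Suc n) - g n \<le> H * (- \<gamma> n * g n + \<alpha> n (g n) + \<beta> n)"
      using rec[of n] a0(3) by (simp add: H_def pos_divide_le_eq mult.commute)
    have "g (Suc n) \<le> g n * (1 - H * \<gamma> n) + H * \<alpha> n (g n) + H * \<beta> n"
      using r by (simp add: algebra_simps)
    also have "\<dots> \<le> x * (1 - H * \<gamma> n) + H * \<alpha> n x + H * \<beta> n"
    proof -
      have "g n * (1 - H * \<gamma> n) \<le> x * (1 - H * \<gamma> n)"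
        using ih hg by (intro mult_right_mono) (auto simp: x_def a_def)
      moreover have "\<alpha> n (g n) \<le> \<alpha> n x" using alpha_mono g_nonneg ih by (simp add: x_def a_def)
      hence "H * \<alpha> n (g n) \<le> H * \<alpha> n x" using a0 by simp
      ultimately show ?thesis by simp
    qed
    also have "\<dots> \<le> x * (1 - H * \<gamma> n) + H * (x * (\<gamma> n - (b - a) / (a * H)))"
    proof -
      have "\<alpha> n x + \<beta> n \<le> x * (\<gamma> n - (b - a) / (a * H))"
        using mu_cond[of n] by (simp add: x_def a_def b_def H_def)
      hence "H * (\<alpha> n x + \<beta> n) \<le> H * (x * (\<gamma> n - (b - a) / (a * H)))"
        using a0 by simp
      thus ?thesis by (simp add: algebra_simps)
    qed
    also have "\<dots> = (2*a - b) / a^2" using a0 by (simp add: x_def field_simps power2_eq_square)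
    also have "\<dots> \<le> 1 / b"
    proof -
      have e: "a^2 - (2*a - b) * b = (a - b)^2" by (simp add: power2_eq_square algebra_simps)
      have "(2*a - b) * b \<le> a^2" using e zero_le_power2[of "a - b"] by linarith
      thus ?thesis using a0 by (simp add: field_simps)
    qed
    finally show ?thesis by (simp add: b_def)
  qed
  have bound: "\<forall>n. 0 \<le> g n \<and> g n \<le> 1 / \<mu> n"
  proof
    fix n show "0 \<le> g n \<and> g n \<le> 1 / \<mu> n"
      by (induction n) (use g_nonneg g0 step in auto)
  qed
  moreover have "filterlim \<mu> at_top sequentially \<longrightarrow> g \<longlonglongrightarrow> 0"
  proof
    assume "filterlim \<mu> at_top sequentially"
    hence "(\<lambda>n. inverse (\<mu> n)) \<longlonglongrightarrow> 0" by (rule tendsto_inverse_0_at_top)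
    hence l: "(\<lambda>n. 1 / \<mu> n) \<longlonglongrightarrow> 0" by (simp add: inverse_eq_divide)
    show "g \<longlonglongrightarrow> 0"
      by (rule tendsto_sandwich[OF _ _ tendsto_const l]) (use bound in auto)
  qed
  ultimately show ?thesis by blast
qed

end
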